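(* Let $p$ be a prime, $m\ge 1$ and $r$ integers with $r^p\equiv 1 \pmod m$, and let $G=\langle x, y\mid x^p=y^m=1,\ x^{-1}yx=y^r\rangle$ (so $G\cong C_p\ltimes C_m$, $|G|=pm$), where $p$ is the smallest prime divisor of $|G|$ and $\gcd(p(r-1), m)=1$. Let $N=\langle y\rangle$ and let $\varphi:G\to G/N$ be the canonical homomorphism. Let $T=g_1\cdot \ldots \cdot g_t$ be a sequence over $G$ such that $\varphi(T)=\varphi(g_1)\cdot\ldots\cdot\varphi(g_t)$ is a minimal product-one sequence over $G/N$. Then for any $u\in\pi(T)$ we have $\pi(T)\supseteq \{u^{r^{s_{1}}}, u^{r^{s_{2}}}, \ldots, u^{r^{s_{t}}}\}$ for some subset $\{s_1,\ldots, s_t\}\subseteq [0,p-1]$. Moreover, if $u\neq 1$, then $t\le p$ and $u^{r^{s_i}}\neq u^{r^{s_j}}$ for all $1\leq i<j\leq t$.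
   Context: A sequence over a group is a finite unordered list of elements with repetition allowed. For a sequence $S=g_1\cdot\ldots\cdot g_\ell$, $\pi(S)=\{g_{\tau(1)}\cdots g_{\tau(\ell)}:\tau \text{ a permutation of } [1,\ell]\}$. $S$ is product-one if $1\in\pi(S)$, and minimal product-one if it is product-one and has no proper nonempty product-one subsequence. For integers $a\le b$, $[a,b]=\{z\in\mathbb Z: a\le z\le b\}$. *)

theory Defs
  imports "HOL-Algebra.Algebra" "HOL-Library.Multiset" "HOL-Number_Theory.Cong"
begin

definition list_prod :: "('a, 'b) monoid_scheme \<Rightarrow> 'a list \<Rightarrow> 'a" where
  "list_prod G xs = foldr (\<lambda>a b. a \<otimes>\<^bsub>G\<^esub> b) xs \<one>\<^bsub>G\<^esub>"

definition seq_prods :: "('a, 'b) monoid_scheme \<Rightarrow> 'a multiset \<Rightarrow> 'a set" where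
  "seq_prods G S = {list_prod G xs | xs. mset xs = S}"

definition product_one :: "('a, 'b) monoid_scheme \<Rightarrow> 'a multiset \<Rightarrow> bool" where
  "product_one G S \<longleftrightarrow> \<one>\<^bsub>G\<^esub> \<in> seq_prods G S"

definition minimal_product_one :: "('a, 'b) monoid_scheme \<Rightarrow> 'a multiset \<Rightarrow> bool" where
  "minimal_product_one G S \<longleftrightarrow> product_one G S \<and>
     (\<forall>S'. S' \<subseteq># S \<and> S' \<noteq> {#} \<and> S' \<noteq> S \<longrightarrow> \<not> product_one G S')"

end

theory Submission
  imports Defs
begin


lemma list_prod_Nil[simp]: "list_prod G [] = \<one>\<^bsub>G\<^esub>"
  by (simp add: list_prod_def)
lemma list_prod_Cons[simp]: "list_prod G (a # xs) = a \<otimes>\<^bsub>G\<^esub> list_prod G xs"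
  by (simp add: list_prod_def)

lemma (in group) inv_cancel1[simp]: "a \<in> carrier G \<Longrightarrow> b \<in> carrier G \<Longrightarrow> inv a \<otimes> (a \<otimes> b) = b"
  by (simp add: m_assoc[symmetric])
lemma (in group) inv_cancel2[simp]: "a \<in> carrier G \<Longrightarrow> b \<in> carrier G \<Longrightarrow> a \<otimes> (inv a \<otimes> b) = b"
  by (simp add: m_assoc[symmetric])

lemma (in monoid) list_prod_closed: "set xs \<subseteq> carrier G \<Longrightarrow> list_prod G xs \<in> carrier G"
  by (induction xs) auto

lemma (in monoid) list_prod_append:
  "set xs \<subseteq> carrier G \<Longrightarrow> set ys \<subseteq> carrier G \<Longrightarrow>
   list_prod G (xs @ ys) = list_prod G xs \<otimes> list_prod G ys"
  by (induction xs) (auto simp: m_assoc list_prod_closed)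

lemma list_prod_hom:
  assumes "h \<in> hom G H" "group G" "group H" "set xs \<subseteq> carrier G"
  shows "h (list_prod G xs) = list_prod H (map h xs)"
  using assms(4)
proof (induction xs)
  case Nil then show ?case using assms by (simp add: group_hom.hom_one group_hom_axioms_def group_hom_def)
next
  case (Cons a xs)
  then show ?case using assms monoid.list_prod_closed[of G xs]
    by (simp add: hom_mult group.is_monoid)
qed

lemma (in monoid) list_prod_pow:
  assumes "\<xi> \<in> carrier G" "\<forall>z \<in> set zs. z = \<xi> [^] (f z :: nat)"
  shows "list_prod G zs = \<xi> [^] sum_list (map f zs)"
  using assms(2)
proof (induction zs)
  case Nil then show ?case by simp
next
  case (Cons a zs)
  then have a: "a = \<xi> [^] f a" by simp
  have "list_prod G (a # zs) = a \<otimes> \<xi> [^] sum_list (map f zs)" using Cons by simp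
  also have "\<dots> = \<xi> [^] f a \<otimes> \<xi> [^] sum_list (map f zs)" using a by simp
  also have "\<dots> = \<xi> [^] (f a + sum_list (map f zs))" using assms(1) by (simp add: nat_pow_mult)
  finally show ?case by simp
qed

lemma nt_coprime:
  fixes r :: int and p m d :: nat
  assumes "Factorial_Ring.prime p" "[r ^ p = 1] (mod int m)" "gcd (int p * (r - 1)) (int m) = 1"
    and "0 < d" "d < p"
  shows "gcd (r ^ d - 1) (int m) = 1"
proof -
  define g where "g = gcd (r ^ d - 1) (int m)"
  have gm: "g dvd int m" unfolding g_def by simp
  have c1: "[r ^ d = 1] (mod g)" unfolding g_def cong_iff_dvd_diff by simp
  have c2: "[r ^ p = 1] (mod g)" using cong_dvd_modulus[OF assms(2) gm] .
  have "\<not> p dvd d" using assms(4,5) by (auto dest: dvd_imp_le)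
  hence "coprime p d" using prime_imp_coprime[OF assms(1)] by blast
  hence "gcd d p = 1" by (simp add: coprime_iff_gcd_eq_1 gcd.commute)
  then obtain a b where ab: "d * a = p * b + 1" using bezout_nat[of d p] assms(4) by auto
  have "[(r ^ d) ^ a = 1 ^ a] (mod g)" using cong_pow[OF c1] .
  hence e1: "[r ^ (p * b + 1) = 1] (mod g)" by (simp add: power_mult[symmetric] ab)
  have "[(r ^ p) ^ b * r = 1 ^ b * r] (mod g)" using cong_mult[OF cong_pow[OF c2] cong_refl] .
  hence e2: "[r ^ (p * b + 1) = r] (mod g)" by (simp add: power_mult[symmetric] power_add mult.commute)
  have "[r = 1] (mod g)" using cong_trans[OF cong_sym[OF e2] e1] .
  hence "g dvd r - 1" by (simp add: cong_iff_dvd_diff)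
  hence "g dvd int p * (r - 1)" by simp
  hence "g dvd gcd (int p * (r - 1)) (int m)" using gm by simp
  hence "g dvd 1" using assms(3) by simp
  moreover have "g \<ge> 0" unfolding g_def by simp
  ultimately show ?thesis unfolding g_def by simp
qed

lemma nt_coprime_r:
  fixes r :: int and p m :: nat
  assumes "Factorial_Ring.prime p" "[r ^ p = 1] (mod int m)"
  shows "coprime r (int m)"
proof -
  have "p > 0" using assms prime_gt_0_nat by blast
  then have "r ^ p = r * r ^ (p - 1)" by (metis power_eq_if neq0_conv)
  hence "[r * r ^ (p - 1) = 1] (mod int m)" using assms by simp
  then have "int m dvd r * r ^ (p - 1) - 1" by (simp add: cong_iff_dvd_diff)
  show ?thesis
  proof (rule coprimeI)
    fix c assume "c dvd r" "c dvd int m"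
    then have "c dvd r * r ^ (p - 1)" "c dvd r * r ^ (p - 1) - 1"
      using \<open>int m dvd _\<close> dvd_trans dvd_mult2 by blast+
    then have "c dvd r * r ^ (p - 1) - (r * r ^ (p - 1) - 1)" by (rule dvd_diff)
    then have "c dvd 1" by simp
    then show "is_unit c" by simp
  qed
qed



locale L3 = group G for G (structure) +
  fixes x y :: 'a and p m :: nat and r :: int
  assumes P: "Factorial_Ring.prime p" and m1: "m \<ge> 1"
    and rp: "[r ^ p = 1] (mod int m)"
    and xc: "x \<in> carrier G" and yc: "y \<in> carrier G"
    and gen: "generate G {x, y} = carrier G"
    and xp: "x [^] p = \<one>" and ym: "y [^] m = \<one>"
    and cj: "inv x \<otimes> y \<otimes> x = y [^] r"
    and gc: "gcd (int p * (r - 1)) (int m) = 1"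
begin

definition "N = generate G {y}"

lemma N_eq: "N = {y [^] (k :: int) | k. k \<in> UNIV}"
  unfolding N_def using generate_pow[OF yc] .

lemma N_sub: "subgroup N G"
  unfolding N_def by (rule generate_is_subgroup) (use yc in simp)

lemma N_car: "n \<in> N \<Longrightarrow> n \<in> carrier G"
  by (rule subgroup.mem_carrier[OF N_sub])

lemma N_comm: assumes "a \<in> N" "b \<in> N" shows "a \<otimes> b = b \<otimes> a"
proof -
  obtain i j where "a = y [^] (i::int)" "b = y [^] (j::int)" using assms unfolding N_eq by auto
  moreover have "y [^] i \<otimes> y [^] j = y [^] j \<otimes> y [^] i"
    using int_pow_mult[OF yc, of i j] int_pow_mult[OF yc, of j i] by (simp add: add.commute)
  ultimately show ?thesis by simp
qed

lemma N_pow: "n \<in> N \<Longrightarrow> n [^] (k :: int) \<in> N"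
  using subgroup_int_pow_closed[OF N_sub] .

lemma conj1: assumes "n \<in> N" shows "inv x \<otimes> n \<otimes> x = n [^] r"
proof -
  obtain k where k: "n = y [^] (k :: int)" using assms unfolding N_eq by auto
  define h where "h = (\<lambda>z. inv x \<otimes> z \<otimes> x)"
  have hh: "h \<in> hom G G" unfolding h_def hom_def using xc by (auto simp: m_assoc)
  have "h (y [^] k) = (h y) [^] k" using hom_int_pow[OF hh yc] by simp
  also have "\<dots> = (y [^] r) [^] k" unfolding h_def using cj by simp
  also have "\<dots> = (y [^] k) [^] r" using yc by (simp add: int_pow_pow mult.commute)
  finally show ?thesis unfolding h_def k .
qed

lemma conjc: assumes "n \<in> N" shows "inv (x [^] (c::nat)) \<otimes> n \<otimes> x [^] c = n [^] (r ^ c)"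
proof (induction c)
  case 0 then show ?case using N_car[OF assms] by simp
next
  case (Suc c)
  have nc: "n \<in> carrier G" using N_car[OF assms] .
  have "inv (x [^] Suc c) \<otimes> n \<otimes> x [^] Suc c = inv x \<otimes> (inv (x [^] c) \<otimes> n \<otimes> x [^] c) \<otimes> x"
    using xc nc by (simp add: nat_pow_Suc inv_mult_group m_assoc)
  also have "\<dots> = (n [^] (r ^ c)) [^] r" using Suc conj1[OF N_pow[OF assms]] by simp
  also have "\<dots> = n [^] (r ^ Suc c)" using nc by (simp add: int_pow_pow mult.commute)
  finally show ?case .
qed

lemma p_pos: "p > 0" using P prime_gt_0_nat by blast

lemma inv_xpow: "inv (x [^] (a::nat)) = x [^] ((p - 1) * a)"
proof -
  have e: "(p - 1) * a + a = p * a" using p_pos by (simp add: algebra_simps)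
  have "x [^] ((p - 1) * a) \<otimes> x [^] a = x [^] ((p - 1) * a + a)"
    using xc by (simp add: nat_pow_mult)
  also have "\<dots> = x [^] (p * a)" using e by simp
  also have "\<dots> = \<one>" using xc xp by (simp add: nat_pow_pow[symmetric])
  finally show ?thesis using xc by (simp add: inv_char inv_equality)
qed

lemma conj_in: "n \<in> N \<Longrightarrow> x [^] (a::nat) \<otimes> n \<otimes> inv (x [^] a) \<in> N"
proof -
  assume n: "n \<in> N"
  define Xp where "Xp = x [^] ((p - 1) * a)"
  have Xpc: "Xp \<in> carrier G" unfolding Xp_def using xc by simp
  have "x [^] a = inv Xp" unfolding Xp_def using xc inv_xpow[of a]
    by (metis inv_inv nat_pow_closed)
  then have "x [^] a \<otimes> n \<otimes> inv (x [^] a) = inv Xp \<otimes> n \<otimes> Xp" using Xpc by simp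
  also have "\<dots> = n [^] (r ^ ((p - 1) * a))" unfolding Xp_def by (rule conjc[OF n])
  finally show ?thesis using N_pow[OF n] by simp
qed

definition "S = {g. \<exists>n \<in> N. \<exists>a::nat. g = n \<otimes> x [^] a}"

lemma S_sub: "subgroup S G"
proof
  show "S \<subseteq> carrier G" unfolding S_def using N_car xc by auto
next
  fix g h assume "g \<in> S" "h \<in> S"
  then obtain n1 a n2 b where g: "n1 \<in> N" "g = n1 \<otimes> x [^] (a::nat)"
    and h: "n2 \<in> N" "h = n2 \<otimes> x [^] (b::nat)" unfolding S_def by auto
  have "g \<otimes> h = (n1 \<otimes> (x [^] a \<otimes> n2 \<otimes> inv (x [^] a))) \<otimes> x [^] (a + b)"
    using g h N_car xc by (simp add: m_assoc nat_pow_mult[symmetric])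
  moreover have "n1 \<otimes> (x [^] a \<otimes> n2 \<otimes> inv (x [^] a)) \<in> N"
    using conj_in[OF h(1)] g(1) subgroup.m_closed[OF N_sub] by blast
  ultimately show "g \<otimes> h \<in> S" unfolding S_def by blast
next
  show "\<one> \<in> S" unfolding S_def using subgroup.one_closed[OF N_sub] xc
    by (auto intro!: bexI[of _ \<one>] exI[of _ 0])
next
  fix g assume "g \<in> S"
  then obtain n a where g: "n \<in> N" "g = n \<otimes> x [^] (a::nat)" unfolding S_def by auto
  have ni: "inv n \<in> N" using g(1) subgroup.m_inv_closed[OF N_sub] by blast
  have "inv g = (inv (x [^] a) \<otimes> inv n \<otimes> x [^] a) \<otimes> inv (x [^] a)"
    using g N_car xc by (simp add: m_assoc inv_mult_group)
  also have "\<dots> = (inv (x [^] a) \<otimes> inv n \<otimes> x [^] a) \<otimes> x [^] ((p - 1) * a)"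
    by (simp only: inv_xpow)
  finally have "inv g = (inv (x [^] a) \<otimes> inv n \<otimes> x [^] a) \<otimes> x [^] ((p - 1) * a)" .
  moreover have "inv (x [^] a) \<otimes> inv n \<otimes> x [^] a \<in> N"
    using conjc[OF ni] N_pow[OF ni] by simp
  ultimately show "inv g \<in> S" unfolding S_def by blast
qed

lemma decomp: "g \<in> carrier G \<Longrightarrow> \<exists>n \<in> N. \<exists>a::nat. g = n \<otimes> x [^] a"
proof -
  assume g: "g \<in> carrier G"
  have "x = \<one> \<otimes> x [^] (1::nat)" using xc by simp
  moreover have "y = y \<otimes> x [^] (0::nat)" using yc by simp
  moreover have "\<one> \<in> N" using subgroup.one_closed[OF N_sub] .
  moreover have "y \<in> N" unfolding N_def by (rule generate.incl) simp
  ultimately have "{x, y} \<subseteq> S" unfolding S_def by blast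
  then have "generate G {x, y} \<subseteq> S" using generate_subgroup_incl S_sub by blast
  then show ?thesis using g gen unfolding S_def by auto
qed

lemma N_normal: "N \<lhd> G"
  unfolding normal_inv_iff
proof (intro conjI ballI)
  show "subgroup N G" by (rule N_sub)
  fix g h assume g: "g \<in> carrier G" and h: "h \<in> N"
  obtain n a where n: "n \<in> N" "g = n \<otimes> x [^] (a::nat)" using decomp[OF g] by auto
  have "g \<otimes> h \<otimes> inv g = n \<otimes> (x [^] a \<otimes> h \<otimes> inv (x [^] a)) \<otimes> inv n"
    using n h N_car xc by (simp add: m_assoc inv_mult_group)
  then show "g \<otimes> h \<otimes> inv g \<in> N"
    using conj_in[OF h] n(1) subgroup.m_closed[OF N_sub] subgroup.m_inv_closed[OF N_sub] by metis
qed

end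


context L3 begin

lemma Npow_m: assumes "n \<in> N" shows "n [^] int m = \<one>"
proof -
  obtain k where k: "n = y [^] (k :: int)" using assms unfolding N_eq by auto
  have "n [^] int m = y [^] (k * int m)" using k yc by (simp add: int_pow_pow)
  also have "\<dots> = (y [^] int m) [^] k" using yc by (simp add: int_pow_pow mult.commute)
  also have "\<dots> = \<one>" using ym by (simp add: int_pow_int)
  finally show ?thesis .
qed

lemma distinct_pow:
  assumes n: "n \<in> N" and n1: "n \<noteq> \<one>" and ab: "a < b" "b < p"
  shows "n [^] (r ^ a) \<noteq> n [^] (r ^ b)"
proof
  assume eq: "n [^] (r ^ a) = n [^] (r ^ b)"
  have nc: "n \<in> carrier G" using N_car[OF n] .
  define d where "d = b - a"
  have d: "0 < d" "d < p" using ab unfolding d_def by auto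
  define M where "M = r ^ a * (r ^ d - 1)"
  have "r ^ b = r ^ a * r ^ d" unfolding d_def using ab by (simp add: power_add[symmetric])
  then have Mdef: "M = r ^ b - r ^ a" unfolding M_def by (simp add: algebra_simps)
  have nM: "n [^] M = \<one>" unfolding Mdef using nc eq by (simp add: int_pow_diff)
  have c1: "coprime (r ^ a) (int m)" using nt_coprime_r[OF P rp] by simp
  have "gcd (r ^ d - 1) (int m) = 1" using nt_coprime[OF P rp gc d] .
  then have c2: "coprime (r ^ d - 1) (int m)" by (simp add: coprime_iff_gcd_eq_1)
  have "coprime M (int m)" unfolding M_def using c1 c2 by simp
  then have "gcd M (int m) = 1" by (simp add: coprime_iff_gcd_eq_1)
  then obtain \<alpha> \<beta> where ab2: "\<alpha> * M + \<beta> * int m = 1" using bezout_int[of M "int m"] by auto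
  have "n = n [^] (1::int)" using nc by simp
  also have "\<dots> = n [^] (M * \<alpha> + int m * \<beta>)" using ab2 by (simp add: algebra_simps)
  also have "\<dots> = (n [^] M) [^] \<alpha> \<otimes> (n [^] int m) [^] \<beta>"
    using nc by (simp add: int_pow_mult int_pow_pow)
  also have "\<dots> = \<one>" using nM Npow_m[OF n] by simp
  finally show False using n1 by simp
qed

definition "Q = G Mod N"
definition "\<xi> = N #> x"

lemma Qgrp: "group Q" unfolding Q_def using normal.factorgroup_is_group[OF N_normal] .
lemma phom: "(\<lambda>g. N #> g) \<in> hom G Q" unfolding Q_def using normal.r_coset_hom_Mod[OF N_normal] .
lemma Qone: "\<one>\<^bsub>Q\<^esub> = N" unfolding Q_def by (simp add: FactGroup_def)
lemma phic: "g \<in> carrier G \<Longrightarrow> N #> g \<in> carrier Q" using phom by (auto simp: hom_def Pi_def)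
lemma xic: "\<xi> \<in> carrier Q" unfolding \<xi>_def using phic xc .

lemma phi_pow_nat: "g \<in> carrier G \<Longrightarrow> N #> (g [^] (k::nat)) = (N #> g) [^]\<^bsub>Q\<^esub> k"
  using hom_nat_pow[OF phom _ is_group Qgrp] by blast

lemma phi_mult: "g \<in> carrier G \<Longrightarrow> h \<in> carrier G \<Longrightarrow> N #> (g \<otimes> h) = (N #> g) \<otimes>\<^bsub>Q\<^esub> (N #> h)"
  using phom by (simp add: hom_mult)

lemma phi_N: "n \<in> N \<Longrightarrow> N #> n = \<one>\<^bsub>Q\<^esub>"
  unfolding Qone using subgroup.rcos_const[OF N_sub is_group] .

lemma phi_pow: "g \<in> carrier G \<Longrightarrow> \<exists>a::nat. N #> g = \<xi> [^]\<^bsub>Q\<^esub> a"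
proof -
  assume g: "g \<in> carrier G"
  obtain n a where n: "n \<in> N" "g = n \<otimes> x [^] (a::nat)" using decomp[OF g] by auto
  have "N #> g = (N #> n) \<otimes>\<^bsub>Q\<^esub> (N #> x [^] a)" using n N_car xc by (simp add: phi_mult)
  also have "\<dots> = \<xi> [^]\<^bsub>Q\<^esub> a"
  proof -
    interpret Q: group Q by (rule Qgrp)
    show ?thesis using phi_N[OF n(1)] phi_pow_nat[OF xc] xic unfolding \<xi>_def by simp
  qed
  finally show ?thesis by blast
qed

lemma xi_p: "\<xi> [^]\<^bsub>Q\<^esub> p = \<one>\<^bsub>Q\<^esub>"
proof -
  have "\<xi> [^]\<^bsub>Q\<^esub> p = N #> (x [^] p)" unfolding \<xi>_def using phi_pow_nat[OF xc] by simp
  also have "\<dots> = \<one>\<^bsub>Q\<^esub>" using xp phi_N subgroup.one_closed[OF N_sub] by simp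
  finally show ?thesis .
qed

lemma xi_mod: "\<xi> [^]\<^bsub>Q\<^esub> (k::nat) = \<xi> [^]\<^bsub>Q\<^esub> (k mod p)"
proof -
  interpret Q: group Q by (rule Qgrp)
  have "\<xi> [^]\<^bsub>Q\<^esub> k = \<xi> [^]\<^bsub>Q\<^esub> (p * (k div p) + k mod p)" by simp
  also have "\<dots> = \<xi> [^]\<^bsub>Q\<^esub> (p * (k div p)) \<otimes>\<^bsub>Q\<^esub> \<xi> [^]\<^bsub>Q\<^esub> (k mod p)"
    by (rule Q.nat_pow_mult[OF xic, symmetric])
  also have "\<dots> = (\<xi> [^]\<^bsub>Q\<^esub> p) [^]\<^bsub>Q\<^esub> (k div p) \<otimes>\<^bsub>Q\<^esub> \<xi> [^]\<^bsub>Q\<^esub> (k mod p)"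
    using Q.nat_pow_pow[OF xic] by simp
  also have "\<dots> = \<xi> [^]\<^bsub>Q\<^esub> (k mod p)" using xi_p xic by simp
  finally show ?thesis .
qed

end


lemma sum_list_map_mset:
  "mset a = mset b \<Longrightarrow> sum_list (map (f :: _ \<Rightarrow> nat) a) = sum_list (map f b)"
proof -
  assume h: "mset a = mset b"
  have "sum_list (map f a) = sum_mset (mset (map f a))" by (rule sum_mset_sum_list[symmetric])
  also have "\<dots> = sum_mset (image_mset f (mset a))" by (simp only: mset_map)
  also have "\<dots> = sum_mset (mset (map f b))" using h by (simp only: mset_map)
  also have "\<dots> = sum_list (map f b)" by (rule sum_mset_sum_list)
  finally show ?thesis .
qed

context L3 begin

lemma main:
  assumes TC: "set T \<subseteq> carrier G"
    and mn: "minimal_product_one Q (mset (map (\<lambda>g. N #> g) T))"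
    and u: "u \<in> seq_prods G (mset T)"
  shows "\<exists>s :: nat \<Rightarrow> nat.
           (\<forall>i \<in> {1..length T}. s i \<in> {0..p - 1}) \<and> inj_on s {1..length T} \<and>
           (\<forall>i \<in> {1..length T}. u [^] (r ^ s i) \<in> seq_prods G (mset T)) \<and>
           (u \<noteq> \<one> \<longrightarrow> length T \<le> p \<and>
              (\<forall>i j. 1 \<le> i \<and> i < j \<and> j \<le> length T \<longrightarrow> u [^] (r ^ s i) \<noteq> u [^] (r ^ s j)))"
proof -
  interpret Q: group Q by (rule Qgrp)
  let ?\<phi> = "\<lambda>g. N #> g"
  obtain xs where xs: "mset xs = mset T" "u = list_prod G xs"
    using u unfolding seq_prods_def by auto
  have setxs: "set xs \<subseteq> carrier G" using TC mset_eq_setD[OF xs(1)] by simp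
  have lenT: "length T = length xs" using xs(1) by (metis size_mset)
  define t where "t = length xs"
  define E where "E c = (SOME a::nat. c = \<xi> [^]\<^bsub>Q\<^esub> a)" for c
  have hE: "?\<phi> g = \<xi> [^]\<^bsub>Q\<^esub> E (?\<phi> g)" if "g \<in> carrier G" for g
    unfolding E_def using phi_pow[OF that] by (rule someI_ex)
  have plist: "?\<phi> (list_prod G ys) = list_prod Q (map ?\<phi> ys)" if "set ys \<subseteq> carrier G" for ys
    using list_prod_hom[OF phom is_group Qgrp that] .
  have ppow: "?\<phi> (list_prod G ys) = \<xi> [^]\<^bsub>Q\<^esub> sum_list (map E (map ?\<phi> ys))"
    if "set ys \<subseteq> carrier G" for ys
  proof -
    have "\<forall>z \<in> set (map ?\<phi> ys). z = \<xi> [^]\<^bsub>Q\<^esub> E z" using hE that by auto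
    then show ?thesis using plist[OF that] Q.list_prod_pow[OF xic] by simp
  qed
  have "product_one Q (mset (map ?\<phi> T))" using mn unfolding minimal_product_one_def by simp
  then obtain zs where zs: "mset zs = mset (map ?\<phi> T)" "list_prod Q zs = \<one>\<^bsub>Q\<^esub>"
    unfolding product_one_def seq_prods_def by auto
  have "\<forall>z \<in> set zs. z = \<xi> [^]\<^bsub>Q\<^esub> E z"
    using mset_eq_setD[OF zs(1)] hE TC by auto
  then have zpow: "list_prod Q zs = \<xi> [^]\<^bsub>Q\<^esub> sum_list (map E zs)"
    using Q.list_prod_pow[OF xic] by simp
  have mxs: "mset (map ?\<phi> xs) = mset (map ?\<phi> T)" using xs(1) by simp
  have "sum_list (map E (map ?\<phi> xs)) = sum_list (map E zs)"
    using sum_list_map_mset[of "map ?\<phi> xs" zs E] mxs zs(1) by simp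
  then have "?\<phi> u = \<one>\<^bsub>Q\<^esub>" using ppow[OF setxs] xs(2) zpow zs(2) by simp
  then have "?\<phi> u = N" by (simp add: Qone)
  moreover have uc: "u \<in> carrier G" using xs(2) setxs list_prod_closed by simp
  ultimately have uN: "u \<in> N" using rcos_self[OF uc N_sub] by simp
  define Pp where "Pp k = list_prod G (take k xs)" for k
  define c where "c k = sum_list (map E (map ?\<phi> (take k xs))) mod p" for k
  have setT: "set (take k xs) \<subseteq> carrier G" "set (drop k xs) \<subseteq> carrier G" for k
    using subset_trans[OF set_take_subset setxs] subset_trans[OF set_drop_subset setxs] by auto
  have Ppc: "Pp k \<in> carrier G" for k unfolding Pp_def by (rule list_prod_closed[OF setT(1)])
  have cP: "?\<phi> (Pp k) = ?\<phi> (x [^] c k)" for k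
  proof -
    have "?\<phi> (Pp k) = \<xi> [^]\<^bsub>Q\<^esub> sum_list (map E (map ?\<phi> (take k xs)))"
      unfolding Pp_def using ppow[OF setT(1)] .
    also have "\<dots> = \<xi> [^]\<^bsub>Q\<^esub> c k" unfolding c_def by (rule xi_mod)
    also have "\<dots> = ?\<phi> (x [^] c k)" unfolding \<xi>_def using phi_pow_nat[OF xc] by simp
    finally show ?thesis .
  qed
  have clt: "c k < p" for k unfolding c_def using p_pos by simp
  have rot: "u [^] (r ^ c k) \<in> seq_prods G (mset T)" for k
  proof -
    have "Pp k \<in> N #> x [^] c k" using repr_independenceD[OF N_sub Ppc cP[symmetric]] by simp
    then obtain n where n: "n \<in> N" "Pp k = n \<otimes> x [^] c k" unfolding r_coset_def by auto
    define D where "D = list_prod G (drop k xs)"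
    have Dc: "D \<in> carrier G" unfolding D_def by (rule list_prod_closed[OF setT(2)])
    have uPD: "u = Pp k \<otimes> D" unfolding xs(2) Pp_def D_def
      using list_prod_append[OF setT(1)[of k] setT(2)[of k]] by simp
    have "list_prod G (drop k xs @ take k xs) = D \<otimes> Pp k"
      unfolding D_def Pp_def using list_prod_append[OF setT(2)[of k] setT(1)[of k]] .
    also have "\<dots> = inv (Pp k) \<otimes> u \<otimes> Pp k" using uPD Dc Ppc by (simp add: m_assoc)
    also have "\<dots> = inv (x [^] c k) \<otimes> (inv n \<otimes> u \<otimes> n) \<otimes> x [^] c k"
      using n N_car xc uc by (simp add: m_assoc inv_mult_group)
    also have "inv n \<otimes> u \<otimes> n = u" using N_comm[OF uN n(1)] N_car[OF n(1)] uc by (simp add: m_assoc)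
    also have "inv (x [^] c k) \<otimes> u \<otimes> x [^] c k = u [^] (r ^ c k)" by (rule conjc[OF uN])
    finally have eq: "list_prod G (drop k xs @ take k xs) = u [^] (r ^ c k)" .
    have "mset (drop k xs @ take k xs) = mset T"
      using xs(1) by (metis append_take_drop_id mset_append add.commute)
    then show ?thesis using eq[symmetric] unfolding seq_prods_def by blast
  qed
  have cne: "c i \<noteq> c j" if ij: "i < j" "j < t" for i j
  proof
    assume ceq: "c i = c j"
    define L where "L = take (j - i) (drop i xs)"
    have tj: "take j xs = take i xs @ L" unfolding L_def using take_add[of i "j - i" xs] ij by simp
    have setL: "set L \<subseteq> carrier G" unfolding L_def using subset_trans[OF set_take_subset setT(2)[of i]] .
    have Lc: "list_prod G L \<in> carrier G" by (rule list_prod_closed[OF setL])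
    have "Pp j = Pp i \<otimes> list_prod G L" unfolding Pp_def tj using list_prod_append[OF setT(1)[of i] setL] .
    then have "?\<phi> (Pp j) = ?\<phi> (Pp i) \<otimes>\<^bsub>Q\<^esub> ?\<phi> (list_prod G L)"
      using phi_mult[OF Ppc Lc] by simp
    moreover have "?\<phi> (Pp j) = ?\<phi> (Pp i)" using cP ceq by metis
    ultimately have "?\<phi> (list_prod G L) = \<one>\<^bsub>Q\<^esub>"
      using phic[OF Ppc] phic[OF Lc] by simp
    then have "list_prod Q (map ?\<phi> L) = \<one>\<^bsub>Q\<^esub>" using plist[OF setL] by simp
    then have po: "product_one Q (mset (map ?\<phi> L))"
      unfolding product_one_def seq_prods_def by blast
    have lenL: "length L = j - i" unfolding L_def using ij unfolding t_def by simp
    have "xs = take i xs @ L @ drop j xs" using tj by (metis append_take_drop_id append.assoc)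
    then have "mset xs = mset (take i xs) + (mset L + mset (drop j xs))"
      by (metis mset_append)
    moreover have "mset L \<subseteq># mset (take i xs) + (mset L + mset (drop j xs))" by simp
    ultimately have "mset L \<subseteq># mset xs" by simp
    then have sub: "mset (map ?\<phi> L) \<subseteq># mset (map ?\<phi> T)"
      using mxs by (metis image_mset_subseteq_mono mset_map)
    have ne: "mset (map ?\<phi> L) \<noteq> {#}" using lenL ij by auto
    have "size (mset (map ?\<phi> L)) < size (mset (map ?\<phi> T))" using lenL lenT ij unfolding t_def by simp
    then have neq: "mset (map ?\<phi> L) \<noteq> mset (map ?\<phi> T)" by (metis less_irrefl)
    show False using mn po sub ne neq unfolding minimal_product_one_def by blast
  qed
  define s where "s i = c (i - 1)" for i
  have s_range: "\<forall>i \<in> {1..length T}. s i \<in> {0..p - 1}" 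
  proof
    fix i show "s i \<in> {0..p - 1}" using clt[of "i - 1"] unfolding s_def by simp
  qed
  have s_inj: "inj_on s {1..length T}"
  proof (rule inj_onI)
    fix i j assume i: "i \<in> {1..length T}" and j: "j \<in> {1..length T}" and e: "s i = s j"
    show "i = j"
    proof (rule ccontr)
      assume "i \<noteq> j"
      then have "i - 1 < j - 1 \<or> j - 1 < i - 1" using i j by auto
      moreover have "i - 1 < t" "j - 1 < t" using i j lenT unfolding t_def by auto
      ultimately have "c (i - 1) \<noteq> c (j - 1)" using cne by metis
      then show False using e unfolding s_def by simp
    qed
  qed
  have s_rot: "\<forall>i \<in> {1..length T}. u [^] (r ^ s i) \<in> seq_prods G (mset T)"
    unfolding s_def using rot by simp
  have s_dist: "u \<noteq> \<one> \<longrightarrow> length T \<le> p \<and>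
      (\<forall>i j. 1 \<le> i \<and> i < j \<and> j \<le> length T \<longrightarrow> u [^] (r ^ s i) \<noteq> u [^] (r ^ s j))"
  proof
    assume u1: "u \<noteq> \<one>"
    have "card {1..length T} \<le> card {0..p - 1}"
      by (rule card_inj_on_le[OF s_inj]) (use s_range in auto)
    then have "length T \<le> p" using p_pos by simp
    moreover have "u [^] (r ^ s i) \<noteq> u [^] (r ^ s j)"
      if "1 \<le> i \<and> i < j \<and> j \<le> length T" for i j
    proof -
      have "i \<in> {1..length T}" "j \<in> {1..length T}" "i \<noteq> j" using that by auto
      then have ne: "s i \<noteq> s j" using inj_on_contraD[OF s_inj] by blast
      have lt: "s i < p" "s j < p" unfolding s_def using clt by auto
      show ?thesis
      proof (cases "s i < s j")
        case True then show ?thesis using distinct_pow[OF uN u1 True lt(2)] by simp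
      next
        case False then have "s j < s i" using ne by simp
        then show ?thesis using distinct_pow[OF uN u1 _ lt(1)] by metis
      qed
    qed
    ultimately show "length T \<le> p \<and>
      (\<forall>i j. 1 \<le> i \<and> i < j \<and> j \<le> length T \<longrightarrow> u [^] (r ^ s i) \<noteq> u [^] (r ^ s j))" by blast
  qed
  show ?thesis using s_range s_inj s_rot s_dist by blast
qed

end

theorem lemma3p2:
  fixes G (structure) and x y :: 'a and p m :: nat and r :: int and T :: "'a list"
  assumes "group G" and "Factorial_Ring.prime p" and "m \<ge> 1"
    and "[r ^ p = 1] (mod int m)"
    and "x \<in> carrier G" and "y \<in> carrier G"
    and "generate G {x, y} = carrier G"
    and "x [^] p = \<one>" and "y [^] m = \<one>"
    and "inv x \<otimes> y \<otimes> x = y [^] r"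
    and "order G = p * m"
    and "\<forall>q::nat. Factorial_Ring.prime q \<and> q dvd p * m \<longrightarrow> p \<le> q"
    and "gcd (int p * (r - 1)) (int m) = 1"
    and "set T \<subseteq> carrier G"
    and "minimal_product_one (G Mod (generate G {y}))
           (mset (map (\<lambda>g. generate G {y} #> g) T))"
  shows "\<forall>u \<in> seq_prods G (mset T). \<exists>s :: nat \<Rightarrow> nat.
           (\<forall>i \<in> {1..length T}. s i \<in> {0..p - 1}) \<and> inj_on s {1..length T} \<and>
           (\<forall>i \<in> {1..length T}. u [^] (r ^ s i) \<in> seq_prods G (mset T)) \<and>
           (u \<noteq> \<one> \<longrightarrow> length T \<le> p \<and>
              (\<forall>i j. 1 \<le> i \<and> i < j \<and> j \<le> length T \<longrightarrow> u [^] (r ^ s i) \<noteq> u [^] (r ^ s j)))"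
proof
  fix u assume u: "u \<in> seq_prods G (mset T)"
  interpret L: L3 G x y p m r
    by (rule L3.intro[OF assms(1)], unfold_locales) (use assms in auto)
  have mn: "minimal_product_one L.Q (mset (map (\<lambda>g. L.N #> g) T))"
    using assms(15) unfolding L.Q_def L.N_def .
  show "\<exists>s :: nat \<Rightarrow> nat.
           (\<forall>i \<in> {1..length T}. s i \<in> {0..p - 1}) \<and> inj_on s {1..length T} \<and>
           (\<forall>i \<in> {1..length T}. u [^] (r ^ s i) \<in> seq_prods G (mset T)) \<and>
           (u \<noteq> \<one> \<longrightarrow> length T \<le> p \<and>
              (\<forall>i j. 1 \<le> i \<and> i < j \<and> j \<le> length T \<longrightarrow> u [^] (r ^ s i) \<noteq> u [^] (r ^ s j)))"
    by (rule L.main[OF assms(14) mn u])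
qed

end
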